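(* Let $k\ge 2$ be even, let $\mathscr{A}\in\mathbb{R}^{n\times n\times\cdots\times n}$ be a $k$th-order $n$-dimensional tensor and $\mathbf{B}\in\mathbb{R}^{n\times m}$, and consider the system $\dot{\mathbf{x}}(t)=\mathscr{A}\mathbf{x}(t)^{k-1}+\mathbf{B}\mathbf{u}(t)$. (i) If the pair $(\mathscr{A},\mathbf{B})$ is controllable, then there exists $\varepsilon>0$ such that every pair $(\tilde{\mathscr{A}},\tilde{\mathbf{B}})$ (of the same sizes) with $\|\tilde{\mathscr{A}}-\mathscr{A}\|<\varepsilon$ and $\|\tilde{\mathbf{B}}-\mathbf{B}\|<\varepsilon$ is also controllable. (ii) If $(\mathscr{A},\mathbf{B})$ is not controllable, then for every $\varepsilon>0$ there exists a controllable pair $(\tilde{\mathscr{A}},\tilde{\mathbf{B}})$ with $\|\tilde{\mathscr{A}}-\mathscr{A}\|<\varepsilon$ and $\|\tilde{\mathbf{B}}-\mathbf{B}\|<\varepsilon$.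
   Context: For a $k$th-order tensor $\mathscr{A}$ and vectors $\mathbf{v}_1,\dots,\mathbf{v}_{k-1}\in\mathbb{R}^n$, $\mathscr{A}\mathbf{v}_1\mathbf{v}_2\cdots\mathbf{v}_{k-1}\in\mathbb{R}^n$ denotes the vector with entries $\sum_{j_2,\dots,j_k}\mathscr{A}_{i j_2\cdots j_k}(\mathbf{v}_1)_{j_2}\cdots(\mathbf{v}_{k-1})_{j_k}$, and $\mathscr{A}\mathbf{x}^{k-1}$ is this with all $\mathbf{v}_i=\mathbf{x}$. Norms are standard (e.g. Frobenius) norms on tensors and matrices. The nonlinear controllability matrix of $(\mathscr{A},\mathbf{B})$ is $\mathbf{C}=[\mathbf{M}_0\ \mathbf{M}_1\ \cdots\ \mathbf{M}_{n-1}]$, where $\mathbf{M}_0=\mathbf{B}$ and, for $j=1,\dots,n-1$, the columns of $\mathbf{M}_j$ are formed from the set $\{\mathscr{A}\mathbf{v}_1\mathbf{v}_2\cdots\mathbf{v}_{k-1} : \mathbf{v}_i\in\operatorname{span}[\mathbf{M}_0\ \cdots\ \mathbf{M}_{j-1}],\ i=1,\dots,k-1\}$ (so that the column span of $\mathbf{C}$ equals the span of all such vectors generated iteratively). The pair $(\mathscr{A},\mathbf{B})$ (equivalently the system) is called controllable (strongly controllable) if $\operatorname{rank}\mathbf{C}=n$. *)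

theory Defs
  imports "HOL-Analysis.Analysis"
begin

text \<open>A kth-order n-dimensional real tensor is represented as a function on index lists
  (entries are only ever read at lists of length k over the index type 'n).\<close>
type_synonym 'n tensor = "'n list \<Rightarrow> real"

definition tnorm :: "nat \<Rightarrow> ('n::finite) tensor \<Rightarrow> real" where
  "tnorm k A = sqrt (\<Sum>js\<in>{js. length js = k}. (A js)\<^sup>2)"

definition tapply :: "nat \<Rightarrow> ('n::finite) tensor \<Rightarrow> (real^'n) list \<Rightarrow> real^'n" where
  "tapply k A vs = (\<chi> i. \<Sum>js\<in>{js. length js = k - 1}.
      A (i # js) * (\<Prod>l<k - 1. (vs ! l) $ (js ! l)))"

text \<open>Column span of [M_0 ... M_j] of the nonlinear controllability matrix.\<close>
primrec ctrl_space :: "nat \<Rightarrow> ('n::finite) tensor \<Rightarrow> real^'m::finite^'n \<Rightarrow> nat \<Rightarrow> (real^'n) set" where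
  "ctrl_space k A B 0 = span (range (\<lambda>j. column j B))"
| "ctrl_space k A B (Suc j) = span (ctrl_space k A B j \<union>
      {tapply k A vs | vs. length vs = k - 1 \<and> set vs \<subseteq> ctrl_space k A B j})"

definition controllable :: "nat \<Rightarrow> ('n::finite) tensor \<Rightarrow> real^'m::finite^'n \<Rightarrow> bool" where
  "controllable k A B \<longleftrightarrow> dim (ctrl_space k A B (CARD('n) - 1)) = CARD('n)"

end

theory Submission imports Defs "HOL-Computational_Algebra.Polynomial" begin

datatype 'm expr = Col 'm | Zer | Add real "'m expr" "'m expr" | Ap "'m expr list"

fun ev :: "nat \<Rightarrow> ('n::finite) tensor \<Rightarrow> real^'m::finite^'n \<Rightarrow> 'm expr \<Rightarrow> real^'n" where
  "ev k A B (Col c) = column c B"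
| "ev k A B Zer = 0"
| "ev k A B (Add c e1 e2) = c *\<^sub>R ev k A B e1 + ev k A B e2"
| "ev k A B (Ap es) = tapply k A (map (ev k A B) es)"

fun ok :: "nat \<Rightarrow> nat \<Rightarrow> 'm expr \<Rightarrow> bool" where
  "ok k j (Col c) = True"
| "ok k j Zer = True"
| "ok k j (Add c e1 e2) = (ok k j e1 \<and> ok k j e2)"
| "ok k 0 (Ap es) = False"
| "ok k (Suc j) (Ap es) = (length es = k - 1 \<and> (\<forall>e\<in>set es. ok k j e))"

lemma ok_Suc: "ok k j e \<Longrightarrow> ok k (Suc j) e"
proof (induction e arbitrary: j)
  case (Ap es)
  then show ?case by (cases j) auto
qed auto

lemma ok_mono: "ok k j e \<Longrightarrow> j \<le> j' \<Longrightarrow> ok k j' e"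
proof -
  assume a: "ok k j e" "j \<le> j'"
  then obtain d where "j' = j + d" using le_Suc_ex by blast
  moreover have "ok k (j + d) e" for d by (induction d) (auto intro: ok_Suc a)
  ultimately show ?thesis by simp
qed

lemma ctrl_Suc: "ctrl_space k A B j \<subseteq> ctrl_space k A B (Suc j)"
  by (auto intro: span_base)

lemma ctrl_mono: "j \<le> j' \<Longrightarrow> ctrl_space k A B j \<subseteq> ctrl_space k A B j'"
  by (induction j' rule: dec_induct) (use ctrl_Suc in blast)+

lemma subspace_ctrl: "subspace (ctrl_space k A B j)"
  by (cases j) (auto simp: subspace_span)

lemma ev_in: "ok k j e \<Longrightarrow> ev k A B e \<in> ctrl_space k A B j"
proof (induction e arbitrary: j)
  case (Col c)
  have "column c B \<in> ctrl_space k A B 0" by (auto intro: span_base)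
  then show ?case using ctrl_mono[of 0 j] by auto
next
  case Zer
  then show ?case using subspace_ctrl[of k A B j] by (auto simp: subspace_0)
next
  case (Add c e1 e2)
  then show ?case using subspace_ctrl[of k A B j]
    by (auto intro!: subspace_add subspace_scale)
next
  case (Ap es)
  then obtain j' where j: "j = Suc j'" by (cases j) auto
  with Ap have "tapply k A (map (ev k A B) es) \<in> {tapply k A vs | vs. length vs = k - 1 \<and> set vs \<subseteq> ctrl_space k A B j'}"
    by (intro CollectI exI[of _ "map (ev k A B) es"]) auto
  then show ?case using j by (auto intro!: span_base)
qed

lemma ex_list: "set vs \<subseteq> {ev k A B e |e. ok k j e} \<Longrightarrow> \<exists>es. map (ev k A B) es = vs \<and> (\<forall>e\<in>set es. ok k j e)"
proof (induction vs)
  case Nil then show ?case by auto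
next
  case (Cons v vs)
  then obtain es where "map (ev k A B) es = vs \<and> (\<forall>e\<in>set es. ok k j e)" by auto
  moreover obtain e where "ev k A B e = v" "ok k j e" using Cons.prems by auto
  ultimately show ?case by (intro exI[of _ "e # es"]) auto
qed

lemma ctrl_ex: "v \<in> ctrl_space k A B j \<Longrightarrow> \<exists>e. ok k j e \<and> ev k A B e = v"
proof -
  let ?E = "\<lambda>j. {ev k A B e |e. ok k j e}"
  have sub: "subspace (?E j)" for j
    unfolding subspace_def
  proof (intro conjI ballI allI)
    show "0 \<in> ?E j" by (auto intro!: exI[of _ Zer])
  next
    fix x y assume "x \<in> ?E j" "y \<in> ?E j"
    then obtain e1 e2 where "x = ev k A B e1" "ok k j e1" "y = ev k A B e2" "ok k j e2" by auto
    then show "x + y \<in> ?E j" by (auto intro!: exI[of _ "Add 1 e1 e2"])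
  next
    fix c x assume "x \<in> ?E j"
    then obtain e1 where "x = ev k A B e1" "ok k j e1" by auto
    then show "c *\<^sub>R x \<in> ?E j" by (auto intro!: exI[of _ "Add c e1 Zer"])
  qed
  have "ctrl_space k A B j \<subseteq> ?E j"
  proof (induction j)
    case 0
    show ?case
      by (simp, rule span_minimal[OF _ sub]) (auto intro!: exI[of _ "Col _"])
  next
    case (Suc j)
    have "ctrl_space k A B j \<union> {tapply k A vs | vs. length vs = k - 1 \<and> set vs \<subseteq> ctrl_space k A B j} \<subseteq> ?E (Suc j)"
    proof (rule subsetI, elim UnE)
      fix x assume "x \<in> ctrl_space k A B j"
      then obtain e where "x = ev k A B e" "ok k j e" using Suc by auto
      then show "x \<in> ?E (Suc j)" using ok_Suc by blast
    next
      fix x assume "x \<in> {tapply k A vs | vs. length vs = k - 1 \<and> set vs \<subseteq> ctrl_space k A B j}"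
      then obtain vs where vs: "x = tapply k A vs" "length vs = k - 1" "set vs \<subseteq> ctrl_space k A B j" by auto
      then obtain es where "map (ev k A B) es = vs" "\<forall>e\<in>set es. ok k j e"
        using ex_list[of vs k A B j] Suc by blast
      then show "x \<in> ?E (Suc j)" using vs
        by (auto intro!: exI[of _ "Ap es"])
    qed
    then show ?case unfolding ctrl_space.simps by (rule span_minimal[OF _ sub])
  qed
  then show "v \<in> ctrl_space k A B j \<Longrightarrow> \<exists>e. ok k j e \<and> ev k A B e = v" by blast
qed


lemma det_ctrl:
  fixes E :: "'n::finite \<Rightarrow> 'm::finite expr" and B :: "real^'m^'n"
  assumes "\<forall>i. ok k (CARD('n) - 1) (E i)" "det (\<chi> i. ev k A B (E i)) \<noteq> 0"
  shows "controllable k A B"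
proof -
  let ?M = "(\<chi> i. ev k A B (E i)) :: real^'n^'n"
  have "invertible ?M" using assms(2) by (simp add: invertible_det_nz)
  then obtain N where "N ** ?M = mat 1" unfolding invertible_def by blast
  then have sp: "span (rows ?M) = UNIV" using matrix_left_invertible_span_rows by blast
  have "rows ?M \<subseteq> ctrl_space k A B (CARD('n) - 1)"
    using ev_in[OF assms(1)[rule_format]] by (auto simp: rows_def row_def)
  then have "span (rows ?M) \<subseteq> ctrl_space k A B (CARD('n) - 1)"
    using span_minimal subspace_ctrl by blast
  then have "ctrl_space k A B (CARD('n) - 1) = UNIV" using sp by auto
  then show ?thesis unfolding controllable_def by simp
qed

lemma det_tendsto:
  fixes M :: "nat \<Rightarrow> real^'n::finite^'n"
  assumes "\<And>i j. (\<lambda>n. M n $ i $ j) \<longlonglongrightarrow> L $ i $ j"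
  shows "(\<lambda>n. det (M n)) \<longlonglongrightarrow> det L"
  unfolding det_def by (intro tendsto_intros assms)

lemma ev_tendsto:
  fixes As :: "nat \<Rightarrow> ('n::finite) tensor" and Bs :: "nat \<Rightarrow> real^'m::finite^'n"
  assumes A: "\<And>js. length js = k \<Longrightarrow> (\<lambda>n. As n js) \<longlonglongrightarrow> A js"
    and B: "Bs \<longlonglongrightarrow> B" and k: "k \<ge> 1"
  shows "ok k j e \<Longrightarrow> (\<lambda>n. ev k (As n) (Bs n) e) \<longlonglongrightarrow> ev k A B e"
proof (induction e arbitrary: j)
  case (Col c)
  show ?case unfolding ev.simps column_def
    by (intro tendsto_vec_lambda tendsto_vec_nth B)
next
  case Zer
  then show ?case by simp
next
  case (Add c e1 e2)
  then show ?case by (auto intro!: tendsto_intros)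
next
  case (Ap es)
  then obtain j' where j: "j = Suc j'" by (cases j) auto
  with Ap.prems have len: "length es = k - 1" and oks: "\<forall>e\<in>set es. ok k j' e" by auto
  have conv: "(\<lambda>n. ev k (As n) (Bs n) (es ! l)) \<longlonglongrightarrow> ev k A B (es ! l)" if "l < k - 1" for l
    using Ap.IH[of "es ! l" j'] oks that len by auto
  show ?case unfolding ev.simps tapply_def
  proof (intro tendsto_vec_lambda tendsto_sum tendsto_mult tendsto_prod)
    fix i :: 'n and js :: "'n list" assume "js \<in> {js. length js = k - 1}"
    then show "(\<lambda>n. As n (i # js)) \<longlonglongrightarrow> A (i # js)" using A[of "i # js"] k by auto
  next
    fix i :: 'n and js :: "'n list" and l assume "l \<in> {..<k - 1}"
    then show "(\<lambda>n. map (ev k (As n) (Bs n)) es ! l $ (js ! l)) \<longlonglongrightarrow> map (ev k A B) es ! l $ (js ! l)"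
      using conv[of l] len by (auto intro!: tendsto_vec_nth)
  qed
qed

definition ispoly :: "(real \<Rightarrow> real) \<Rightarrow> bool" where
  "ispoly f \<longleftrightarrow> (\<exists>p. \<forall>t. f t = poly p t)"

lemma ispoly_const: "ispoly (\<lambda>t. c)"
  unfolding ispoly_def by (intro exI[of _ "[:c:]"]) simp

lemma ispoly_add: "ispoly f \<Longrightarrow> ispoly g \<Longrightarrow> ispoly (\<lambda>t. f t + g t)"
  unfolding ispoly_def by (metis poly_add)

lemma ispoly_mult: "ispoly f \<Longrightarrow> ispoly g \<Longrightarrow> ispoly (\<lambda>t. f t * g t)"
  unfolding ispoly_def by (metis poly_mult)

lemma ispoly_sum: "(\<And>x. x \<in> S \<Longrightarrow> ispoly (f x)) \<Longrightarrow> ispoly (\<lambda>t. \<Sum>x\<in>S. f x t)"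
proof -
  assume "\<And>x. x \<in> S \<Longrightarrow> ispoly (f x)"
  then have "\<forall>x\<in>S. \<exists>p. \<forall>t. f x t = poly p t" unfolding ispoly_def by blast
  then obtain P where "\<forall>x\<in>S. \<forall>t. f x t = poly (P x) t" by metis
  then show ?thesis unfolding ispoly_def by (intro exI[of _ "\<Sum>x\<in>S. P x"]) (simp add: poly_sum)
qed

lemma ispoly_prod: "(\<And>x. x \<in> S \<Longrightarrow> ispoly (f x)) \<Longrightarrow> ispoly (\<lambda>t. \<Prod>x\<in>S. f x t)"
proof -
  assume "\<And>x. x \<in> S \<Longrightarrow> ispoly (f x)"
  then have "\<forall>x\<in>S. \<exists>p. \<forall>t. f x t = poly p t" unfolding ispoly_def by blast
  then obtain P where "\<forall>x\<in>S. \<forall>t. f x t = poly (P x) t" by metis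
  then show ?thesis unfolding ispoly_def by (intro exI[of _ "\<Prod>x\<in>S. P x"]) (simp add: poly_prod)
qed

lemma ev_poly:
  fixes At :: "real \<Rightarrow> ('n::finite) tensor" and Bt :: "real \<Rightarrow> real^'m::finite^'n"
  assumes A: "\<And>js. ispoly (\<lambda>t. At t js)"
    and B: "\<And>i c. ispoly (\<lambda>t. Bt t $ i $ c)"
  shows "ok k j e \<Longrightarrow> ispoly (\<lambda>t. ev k (At t) (Bt t) e $ i)"
proof (induction e arbitrary: j i)
  case (Col c)
  show ?case unfolding ev.simps column_def using B by simp
next
  case Zer
  then show ?case by (simp add: ispoly_const)
next
  case (Add c e1 e2)
  then show ?case by (auto intro!: ispoly_add ispoly_mult ispoly_const)
next
  case (Ap es)
  then obtain j' where j: "j = Suc j'" by (cases j) auto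
  with Ap.prems have len: "length es = k - 1" and oks: "\<forall>e\<in>set es. ok k j' e" by auto
  have conv: "ispoly (\<lambda>t. ev k (At t) (Bt t) (es ! l) $ i')" if "l < k - 1" for l i'
    using Ap.IH[of "es ! l" j'] oks that len by auto
  show ?case unfolding ev.simps tapply_def vec_lambda_beta
  proof (intro ispoly_sum ispoly_mult ispoly_prod A)
    fix js :: "'n list" and l assume "l \<in> {..<k - 1}"
    then show "ispoly (\<lambda>t. map (ev k (At t) (Bt t)) es ! l $ (js ! l))"
      using conv[of l] len by auto
  qed
qed

lemma det_poly:
  fixes M :: "real \<Rightarrow> real^'n::finite^'n"
  assumes "\<And>i j. ispoly (\<lambda>t. M t $ i $ j)"
  shows "ispoly (\<lambda>t. det (M t))"
  unfolding det_def by (intro ispoly_sum ispoly_mult ispoly_prod ispoly_const assms)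


fun X :: "nat \<Rightarrow> 'm \<Rightarrow> nat \<Rightarrow> 'm expr" where
  "X k c 0 = Col c"
| "X k c (Suc r) = Ap (replicate (k - 1) (X k c r))"

lemma ok_X: "ok k r (X k c r)"
  by (induction r) auto

lemma fin_len: "finite {js :: ('n::finite) list. length js = k}"
  using finite_lists_length_eq[of "UNIV :: 'n set" k] by simp

lemma prod_axis:
  fixes js :: "('n::finite) list"
  assumes "length js = k - 1"
  shows "(\<Prod>l<k - 1. (replicate (k - 1) (axis a (1::real)) ! l) $ (js ! l)) = (if js = replicate (k - 1) a then 1 else 0)"
proof (cases "js = replicate (k - 1) a")
  case True
  then show ?thesis by (simp add: axis_def)
next
  case False
  then obtain l where l: "l < k - 1" "js ! l \<noteq> a"
    using assms by (metis list_eq_iff_nth_eq length_replicate nth_replicate)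
  then have "(replicate (k - 1) (axis a (1::real)) ! l) $ (js ! l) = 0" by (simp add: axis_def)
  then have "(\<Prod>l<k - 1. (replicate (k - 1) (axis a (1::real)) ! l) $ (js ! l)) = 0"
    using l by (intro prod_zero) auto
  then show ?thesis using False by simp
qed

lemma tapply_rep:
  fixes A :: "('n::finite) tensor"
  shows "tapply k A (replicate (k - 1) (axis a 1)) = (\<chi> i. A (i # replicate (k - 1) a))"
proof -
  have "tapply k A (replicate (k - 1) (axis a 1)) $ i = A (i # replicate (k - 1) a)" for i
  proof -
    have "tapply k A (replicate (k - 1) (axis a 1)) $ i =
       (\<Sum>js\<in>{js. length js = k - 1}. if js = replicate (k - 1) a then A (i # js) else 0)"
      unfolding tapply_def vec_lambda_beta by (intro sum.cong refl, subst prod_axis) auto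
    also have "\<dots> = A (i # replicate (k - 1) a)"
      by (subst sum.delta) (simp_all add: fin_len)
    finally show ?thesis .
  qed
  then show ?thesis by (simp add: vec_eq_iff)
qed

lemma construction:
  assumes k: "k \<ge> 2"
  shows "\<exists>(A0::('n::finite) tensor) (B0::real^'m::finite^'n) (E::'n \<Rightarrow> 'm expr).
     (\<forall>i. ok k (CARD('n) - 1) (E i)) \<and> (\<forall>i. ev k A0 B0 (E i) = axis i 1)"
proof -
  let ?n = "CARD('n)"
  obtain h :: "nat \<Rightarrow> 'n" where h: "bij_betw h {0..<?n} UNIV"
    using ex_bij_betw_nat_finite[of "UNIV :: 'n set"] by auto
  have inj: "inj_on h {0..<?n}" using h bij_betw_def by blast
  define B0 :: "real^'m^'n" where "B0 = (\<chi> i c. if i = h 0 then 1 else 0)"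
  define A0 :: "'n tensor" where
    "A0 = (\<lambda>js. if \<exists>r. Suc r < ?n \<and> js = h (Suc r) # replicate (k - 1) (h r) then 1 else 0)"
  fix c :: 'm
  have evX: "r < ?n \<Longrightarrow> ev k A0 B0 (X k c r) = axis (h r) 1" for r
  proof (induction r)
    case 0
    then show ?case by (simp add: B0_def column_def axis_def vec_eq_iff)
  next
    case (Suc r)
    have eq: "(\<exists>r'. Suc r' < ?n \<and> i # replicate (k - 1) (h r) = h (Suc r') # replicate (k - 1) (h r'))
       \<longleftrightarrow> i = h (Suc r)" for i
    proof
      assume "\<exists>r'. Suc r' < ?n \<and> i # replicate (k - 1) (h r) = h (Suc r') # replicate (k - 1) (h r')"
      then obtain r' where r': "Suc r' < ?n" "i = h (Suc r')" "replicate (k - 1) (h r) = replicate (k - 1) (h r')"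
        by auto
      then have "h r = h r'" using k by (simp add: replicate_eq_replicate)
      then have "r = r'" using inj Suc.prems r'(1) by (auto dest: inj_onD)
      then show "i = h (Suc r)" using r' by simp
    next
      assume "i = h (Suc r)"
      then show "\<exists>r'. Suc r' < ?n \<and> i # replicate (k - 1) (h r) = h (Suc r') # replicate (k - 1) (h r')"
        using Suc.prems by auto
    qed
    have a0: "A0 (i # replicate (k - 1) (h r)) = (if i = h (Suc r) then 1 else 0)" for i
      unfolding A0_def eq by (rule refl)
    have "ev k A0 B0 (X k c (Suc r)) = tapply k A0 (replicate (k - 1) (axis (h r) 1))"
      using Suc by (simp add: map_replicate)
    also have "\<dots> = axis (h (Suc r)) 1"
      unfolding tapply_rep using a0 by (auto simp: axis_def vec_eq_iff)
    finally show ?case .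
  qed
  define g where "g = inv_into {0..<?n} h"
  have g: "g i < ?n" "h (g i) = i" for i
  proof -
    have "g i \<in> {0..<?n}" unfolding g_def using bij_betwE[OF bij_betw_inv_into[OF h]] by blast
    then show "g i < ?n" by simp
    show "h (g i) = i" unfolding g_def using bij_betw_inv_into_right[OF h] by blast
  qed
  show ?thesis
  proof (intro exI conjI allI)
    fix i
    show "ok k (?n - 1) (X k c (g i))" using ok_mono[OF ok_X, of "g i" "?n - 1"] g(1)[of i] by fastforce
    show "ev k A0 B0 (X k c (g i)) = axis i 1" using evX[OF g(1)] g(2) by simp
  qed
qed


lemma tnorm_ge: "length js = k \<Longrightarrow> \<bar>D js\<bar> \<le> tnorm k (D :: ('n::finite) tensor)"
proof -
  assume "length js = k"
  then have "(D js)\<^sup>2 \<le> (\<Sum>js\<in>{js. length js = k}. (D js)\<^sup>2)"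
    by (intro member_le_sum) (auto simp: fin_len)
  then have "sqrt ((D js)\<^sup>2) \<le> tnorm k D" unfolding tnorm_def using real_sqrt_le_mono by blast
  then show ?thesis by simp
qed

lemma tnorm_scale: "tnorm k (\<lambda>js. c * (D :: ('n::finite) tensor) js) = \<bar>c\<bar> * tnorm k D"
  unfolding tnorm_def by (simp add: power_mult_distrib sum_distrib_left[symmetric] real_sqrt_mult)

lemma tnorm_nonneg: "tnorm k D \<ge> 0"
  unfolding tnorm_def by (simp add: sum_nonneg)

lemma mat1: "(\<chi> i. axis i (1::real)) = (mat 1 :: real^'n::finite^'n)"
  by (simp add: vec_eq_iff axis_def mat_def)

lemma det_axis: "det ((\<chi> i. axis i (1::real)) :: real^'n::finite^'n) = 1"
  by (simp add: mat1)

lemma part1: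
  fixes A :: "('n::finite) tensor" and B :: "real^'m::finite^'n"
  assumes k: "k \<ge> 2" and c: "controllable k A B"
  shows "\<exists>\<epsilon>>0. \<forall>(A'::'n tensor) (B'::real^'m^'n).
               tnorm k (\<lambda>js. A' js - A js) < \<epsilon> \<and> norm (B' - B) < \<epsilon> \<longrightarrow> controllable k A' B'"
proof (rule ccontr)
  let ?n = "CARD('n)"
  have "dim (ctrl_space k A B (?n - 1)) = dim (UNIV :: (real^'n) set)"
    using c unfolding controllable_def by simp
  moreover have "DIM(real^'n) = ?n" by simp
  ultimately have "span (ctrl_space k A B (?n - 1)) = UNIV" using dim_eq_full[of "ctrl_space k A B (?n - 1)"] by simp
  then have full: "ctrl_space k A B (?n - 1) = UNIV" using subspace_ctrl span_eq_iff by metis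
  have "\<forall>i. \<exists>e. ok k (?n - 1) e \<and> ev k A B e = axis i 1"
    using ctrl_ex full by blast
  then obtain E where E: "\<forall>i. ok k (?n - 1) (E i)" "\<forall>i. ev k A B (E i) = axis i 1" by metis
  assume neg: "\<not> ?thesis"
  have "\<forall>n. \<exists>A' B'. tnorm k (\<lambda>js. A' js - A js) < inverse (real (Suc n)) \<and>
      norm (B' - B) < inverse (real (Suc n)) \<and> \<not> controllable k A' (B' :: real^'m^'n)"
  proof (rule allI)
    fix n :: nat
    have pos: "inverse (real (Suc n)) > 0" by simp
    show "\<exists>A' B'. tnorm k (\<lambda>js. A' js - A js) < inverse (real (Suc n)) \<and>
      norm (B' - B) < inverse (real (Suc n)) \<and> \<not> controllable k A' (B' :: real^'m^'n)"
    proof (rule ccontr)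
      assume "\<not> (\<exists>A' B'. tnorm k (\<lambda>js. A' js - A js) < inverse (real (Suc n)) \<and>
        norm (B' - B) < inverse (real (Suc n)) \<and> \<not> controllable k A' (B' :: real^'m^'n))"
      then have "\<forall>(A'::'n tensor) (B'::real^'m^'n). tnorm k (\<lambda>js. A' js - A js) < inverse (real (Suc n)) \<and>
        norm (B' - B) < inverse (real (Suc n)) \<longrightarrow> controllable k A' B'" by auto
      with pos have "\<exists>\<epsilon>>0. \<forall>(A'::'n tensor) (B'::real^'m^'n).
               tnorm k (\<lambda>js. A' js - A js) < \<epsilon> \<and> norm (B' - B) < \<epsilon> \<longrightarrow> controllable k A' B'"
        by (intro exI[of _ "inverse (real (Suc n))"] conjI)
      with neg show False by contradiction
    qed
  qed
  then obtain As Bs where AB: "\<forall>n. tnorm k (\<lambda>js. As n js - A js) < inverse (real (Suc n)) \<and>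
      norm (Bs n - B) < inverse (real (Suc n)) \<and> \<not> controllable k (As n) (Bs n :: real^'m^'n)"
    by metis
  have Ac: "(\<lambda>n. As n js) \<longlonglongrightarrow> A js" if "length js = k" for js
  proof -
    have "(\<lambda>n. As n js - A js) \<longlonglongrightarrow> 0"
    proof (rule Lim_null_comparison[OF _ LIMSEQ_inverse_real_of_nat])
      show "\<forall>\<^sub>F n in sequentially. norm (As n js - A js) \<le> inverse (real (Suc n))"
      proof (rule always_eventually, rule allI)
        fix n
        have "\<bar>As n js - A js\<bar> \<le> tnorm k (\<lambda>js. As n js - A js)"
          using tnorm_ge[OF that, of "\<lambda>js. As n js - A js"] by simp
        then show "norm (As n js - A js) \<le> inverse (real (Suc n))"
          using AB[rule_format, of n] by simp
      qed
    qed
    then show ?thesis by (rule LIM_zero_cancel)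
  qed
  have Bc: "Bs \<longlonglongrightarrow> B"
  proof -
    have "(\<lambda>n. Bs n - B) \<longlonglongrightarrow> 0"
    proof (rule Lim_null_comparison[OF _ LIMSEQ_inverse_real_of_nat])
      show "\<forall>\<^sub>F n in sequentially. norm (Bs n - B) \<le> inverse (real (Suc n))"
      proof (rule always_eventually, rule allI)
        fix n
        show "norm (Bs n - B) \<le> inverse (real (Suc n))"
          using AB[rule_format, of n] by simp
      qed
    qed
    then show ?thesis by (rule LIM_zero_cancel)
  qed
  let ?M = "\<lambda>n. (\<chi> i. ev k (As n) (Bs n) (E i)) :: real^'n^'n"
  have "(\<lambda>n. det (?M n)) \<longlonglongrightarrow> det (\<chi> i. ev k A B (E i))"
  proof (rule det_tendsto)
    fix i j
    have "(\<lambda>n. ev k (As n) (Bs n) (E i)) \<longlonglongrightarrow> ev k A B (E i)"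
      by (rule ev_tendsto[OF Ac Bc]) (use k E(1) in auto)
    then show "(\<lambda>n. (\<chi> i. ev k (As n) (Bs n) (E i)) $ i $ j) \<longlonglongrightarrow> (\<chi> i. ev k A B (E i)) $ i $ j"
      unfolding vec_lambda_beta by (rule tendsto_vec_nth)
  qed
  moreover have "(\<chi> i. ev k A B (E i)) = ((\<chi> i. axis i 1) :: real^'n^'n)" using E(2) by simp
  ultimately have "(\<lambda>n. det (?M n)) \<longlonglongrightarrow> 1" using det_axis[where 'n='n] by metis
  then have "\<forall>\<^sub>F n in sequentially. det (?M n) > 0" by (rule order_tendstoD) simp
  then obtain N where "det (?M N) > 0" using eventually_sequentially by auto
  then have "controllable k (As N) (Bs N)" using det_ctrl[of k E] E(1) by auto
  then show False using AB by auto
qed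

lemma part2:
  fixes A :: "('n::finite) tensor" and B :: "real^'m::finite^'n"
  assumes k: "k \<ge> 2" and e: "\<epsilon> > 0"
  shows "\<exists>(A'::'n tensor) (B'::real^'m^'n).
               tnorm k (\<lambda>js. A' js - A js) < \<epsilon> \<and> norm (B' - B) < \<epsilon> \<and> controllable k A' B'"
proof -
  let ?n = "CARD('n)"
  obtain A0 :: "'n tensor" and B0 :: "real^'m^'n" and E
    where E: "\<forall>i. ok k (?n - 1) (E i)" "\<forall>i. ev k A0 B0 (E i) = axis i 1"
    using construction[OF k] by blast
  define At where "At = (\<lambda>t js. A js + t * (A0 js - A js))"
  define Bt where "Bt = (\<lambda>t. B + t *\<^sub>R (B0 - B))"
  have id: "ispoly (\<lambda>t. t)" unfolding ispoly_def by (intro exI[of _ "[:0, 1:]"]) simp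
  have pA: "ispoly (\<lambda>t. At t js)" for js unfolding At_def
    by (intro ispoly_add ispoly_mult ispoly_const id)
  have pB: "ispoly (\<lambda>t. Bt t $ i $ c)" for i c unfolding Bt_def
    by simp (intro ispoly_add ispoly_mult ispoly_const id)
  have "ispoly (\<lambda>t. det ((\<chi> i. ev k (At t) (Bt t) (E i)) :: real^'n^'n))"
  proof (rule det_poly)
    fix i j
    have "ispoly (\<lambda>t. ev k (At t) (Bt t) (E i) $ j)"
      by (rule ev_poly[of At Bt, OF pA pB]) (rule E(1)[rule_format])
    then show "ispoly (\<lambda>t. (\<chi> i. ev k (At t) (Bt t) (E i)) $ i $ j)" by simp
  qed
  then obtain p where p: "\<And>t. det ((\<chi> i. ev k (At t) (Bt t) (E i)) :: real^'n^'n) = poly p t"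
    unfolding ispoly_def by blast
  have "At 1 = A0" "Bt 1 = B0" unfolding At_def Bt_def by auto
  moreover have "(\<chi> i. ev k A0 B0 (E i)) = ((\<chi> i. axis i 1) :: real^'n^'n)" using E(2) by simp
  ultimately have "poly p 1 = 1" using p[of 1] det_axis[where 'n='n] by metis
  then have "p \<noteq> 0" by auto
  then have fin: "finite {t. poly p t = 0}" by (rule poly_roots_finite)
  define C where "C = tnorm k (\<lambda>js. A0 js - A js) + norm (B0 - B)"
  have C0: "C \<ge> 0" unfolding C_def using tnorm_nonneg[of k "\<lambda>js. A0 js - A js"] norm_ge_zero[of "B0 - B"] by linarith
  define d where "d = \<epsilon> / (C + 1)"
  have d0: "d > 0" unfolding d_def using e C0 by simp
  have "infinite ({0<..<d} - {t. poly p t = 0})"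
    using infinite_Ioo[OF d0] fin by (rule Diff_infinite_finite[rotated])
  then have "({0<..<d} - {t. poly p t = 0}) \<noteq> {}" by (intro notI) simp
  then obtain t where "t \<in> {0<..<d} - {t. poly p t = 0}" by blast
  then have t: "0 < t" "t < d" "poly p t \<noteq> 0" by auto
  have ctl: "controllable k (At t) (Bt t)" using det_ctrl[of k E] E(1) p t(3) by auto
  have "t * C < \<epsilon>"
  proof -
    have "t * C \<le> t * (C + 1)" using t by simp
    also have "\<dots> < d * (C + 1)" using t C0 by (intro mult_strict_right_mono) auto
    also have "\<dots> = \<epsilon>" unfolding d_def using C0 by simp
    finally show ?thesis .
  qed
  moreover have "tnorm k (\<lambda>js. At t js - A js) = t * tnorm k (\<lambda>js. A0 js - A js)"
    unfolding At_def using tnorm_scale[of k t "\<lambda>js. A0 js - A js"] t by simp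
  moreover have "norm (Bt t - B) = t * norm (B0 - B)" unfolding Bt_def using t by simp
  moreover have "t * tnorm k (\<lambda>js. A0 js - A js) \<le> t * C" "t * norm (B0 - B) \<le> t * C"
    using t tnorm_nonneg[of k "\<lambda>js. A0 js - A js"] unfolding C_def by auto
  ultimately show ?thesis using ctl by (intro exI[of _ "At t"] exI[of _ "Bt t"]) auto
qed

theorem proposition5:
  fixes A :: "('n::finite) tensor" and B :: "real^'m::finite^'n" and k :: nat
  assumes "even k" and "k \<ge> 2"
  shows "(controllable k A B \<longrightarrow>
            (\<exists>\<epsilon>>0. \<forall>(A'::'n tensor) (B'::real^'m^'n).
               tnorm k (\<lambda>js. A' js - A js) < \<epsilon> \<and> norm (B' - B) < \<epsilon> \<longrightarrow> controllable k A' B'))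
       \<and> (\<not> controllable k A B \<longrightarrow>
            (\<forall>\<epsilon>>0. \<exists>(A'::'n tensor) (B'::real^'m^'n).
               tnorm k (\<lambda>js. A' js - A js) < \<epsilon> \<and> norm (B' - B) < \<epsilon> \<and> controllable k A' B'))"
  using part1[OF assms(2)] part2[OF assms(2)] by blast

end
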